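(* Let $(Y_t,X_t)_{t\ge1}$ be a hidden Markov model with finite state space $S$, $T\ge1$, and let $k$ satisfy $T\ge k>1$. Then for all paths $s^T\in S^T$, $$\bar R_k(s^T)=\bar R_\infty(s^T)+\bar R_{k-1}(s^T),$$ and for every $x^T\in\mathcal X^T$ (with $p(x^T)>0$) and all $s^T\in S^T$, $$\bar R_k(s^T|x^T)=\bar R_\infty(s^T|x^T)+\bar R_{k-1}(s^T|x^T).$$
   Context: Hidden Markov model: $Y$ is a Markov chain on finite $S$; given $Y$, the $X_t$ are conditionally independent and $X_t$ has density $f_s$ when $Y_t=s$. Prior path law $p(s^T)=\mathbf P(Y^T=s^T)$, posterior path law $p(s^T|x^T)=\mathbf P(Y^T=s^T|X^T=x^T)$; for $1\le a\le b\le T$, $p(s_a^b)=\mathbf P(Y_a^b=s_a^b)$ and $p(s_a^b|x^T)=\mathbf P(Y_a^b=s_a^b|X^T=x^T)$, where $s_a^b=(s_a,\dots,s_b)$. For a positive integer $k$: $\bar R_k(s^T)=-\frac1T\ln\prod_{j=1-k}^{T-1}p(s_{(j+1)\vee1}^{(j+k)\wedge T})$ and $\bar R_k(s^T|x^T)=-\frac1T\ln\prod_{j=1-k}^{T-1}p(s_{(j+1)\vee1}^{(j+k)\wedge T}|x^T)$; also $\bar R_\infty(s^T)=-\frac1T\ln p(s^T)$ and $\bar R_\infty(s^T|x^T)=-\frac1T\ln p(s^T|x^T)$. Here $\vee=\max$, $\wedge=\min$, $\ln0=-\infty$. *)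

theory Defs
  imports "HOL-Analysis.Analysis"
begin

definition eln :: "real \<Rightarrow> ereal" where
  "eln x = (if x = 0 then -\<infinity> else ereal (ln x))"

definition paths :: "nat \<Rightarrow> (nat \<Rightarrow> 's) set" where
  "paths T = Pi\<^sub>E {1..T} (\<lambda>_. UNIV)"

definition path_prob :: "('s \<Rightarrow> real) \<Rightarrow> ('s \<Rightarrow> 's \<Rightarrow> real) \<Rightarrow> nat \<Rightarrow> (nat \<Rightarrow> 's) \<Rightarrow> real" where
  "path_prob init P T s = init (s 1) * (\<Prod>t\<in>{2..T}. P (s (t - 1)) (s t))"

definition lik :: "('s \<Rightarrow> 'x \<Rightarrow> real) \<Rightarrow> nat \<Rightarrow> (nat \<Rightarrow> 'x) \<Rightarrow> (nat \<Rightarrow> 's) \<Rightarrow> real" where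
  "lik f T x s = (\<Prod>t\<in>{1..T}. f (s t) (x t))"

definition agree :: "nat \<Rightarrow> nat \<Rightarrow> nat \<Rightarrow> (nat \<Rightarrow> 's) \<Rightarrow> (nat \<Rightarrow> 's) set" where
  "agree T a b s = {u \<in> paths T. \<forall>i\<in>{a..b}. u i = s i}"

definition prior_marg :: "('s \<Rightarrow> real) \<Rightarrow> ('s \<Rightarrow> 's \<Rightarrow> real) \<Rightarrow> nat \<Rightarrow> (nat \<Rightarrow> 's) \<Rightarrow> nat \<Rightarrow> nat \<Rightarrow> real" where
  "prior_marg init P T s a b = (\<Sum>u\<in>agree T a b s. path_prob init P T u)"

definition obs_density :: "('s::finite \<Rightarrow> real) \<Rightarrow> ('s \<Rightarrow> 's \<Rightarrow> real) \<Rightarrow> ('s \<Rightarrow> 'x \<Rightarrow> real) \<Rightarrow> nat \<Rightarrow> (nat \<Rightarrow> 'x) \<Rightarrow> real" where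
  "obs_density init P f T x = (\<Sum>u\<in>paths T. path_prob init P T u * lik f T x u)"

definition post_marg :: "('s::finite \<Rightarrow> real) \<Rightarrow> ('s \<Rightarrow> 's \<Rightarrow> real) \<Rightarrow> ('s \<Rightarrow> 'x \<Rightarrow> real) \<Rightarrow> nat \<Rightarrow> (nat \<Rightarrow> 'x) \<Rightarrow> (nat \<Rightarrow> 's) \<Rightarrow> nat \<Rightarrow> nat \<Rightarrow> real" where
  "post_marg init P f T x s a b =
     (\<Sum>u\<in>agree T a b s. path_prob init P T u * lik f T x u) / obs_density init P f T x"

text \<open>R_k-bar for a block-probability function q a b = p(s_a^b) (or p(s_a^b|x^T)):
  -(1/T) ln prod_{j=1-k}^{T-1} q((j+1) max 1, (j+k) min T).\<close>
definition Rbar :: "nat \<Rightarrow> nat \<Rightarrow> (nat \<Rightarrow> nat \<Rightarrow> real) \<Rightarrow> ereal" where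
  "Rbar T k q = ereal (- 1 / real T) *
     eln (\<Prod>j\<in>{1 - int k .. int T - 1}. q (nat (max (j + 1) 1)) (nat (min (j + int k) (int T))))"

definition Rbar_inf :: "nat \<Rightarrow> (nat \<Rightarrow> nat \<Rightarrow> real) \<Rightarrow> ereal" where
  "Rbar_inf T q = ereal (- 1 / real T) * eln (q 1 T)"

end

theory Submission
  imports Defs
begin


definition merge :: "nat \<Rightarrow> (nat \<Rightarrow> 's) \<Rightarrow> (nat \<Rightarrow> 's) \<Rightarrow> nat \<Rightarrow> 's" where
  "merge b u v = (\<lambda>i. if i \<le> b then u i else v i)"

lemma w_split:
  assumes "1 \<le> b" "b \<le> T"
  shows "path_prob init P T u * lik f T x u =
    (init (u 1) * (\<Prod>t\<in>{2..b}. P (u (t-1)) (u t)) * (\<Prod>t\<in>{1..b}. f (u t) (x t))) *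
    ((\<Prod>t\<in>{Suc b..T}. P (u (t-1)) (u t)) * (\<Prod>t\<in>{Suc b..T}. f (u t) (x t)))"
proof -
  have e1: "{2..T} = {2..b} \<union> {Suc b..T}" using assms by auto
  have e2: "{1..T} = {1..b} \<union> {Suc b..T}" using assms by auto
  have "(\<Prod>t\<in>{2..T}. P (u (t-1)) (u t)) = (\<Prod>t\<in>{2..b}. P (u (t-1)) (u t)) * (\<Prod>t\<in>{Suc b..T}. P (u (t-1)) (u t))"
    unfolding e1 by (rule prod.union_disjoint) auto
  moreover have "(\<Prod>t\<in>{1..T}. f (u t) (x t)) = (\<Prod>t\<in>{1..b}. f (u t) (x t)) * (\<Prod>t\<in>{Suc b..T}. f (u t) (x t))"
    unfolding e2 by (rule prod.union_disjoint) auto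
  ultimately show ?thesis unfolding path_prob_def lik_def by (simp add: ac_simps)
qed

lemma w_merge:
  assumes "1 \<le> b" "b \<le> T" "u b = v b"
  shows "(path_prob init P T (merge b u v) * lik f T x (merge b u v)) *
         (path_prob init P T (merge b v u) * lik f T x (merge b v u)) =
         (path_prob init P T u * lik f T x u) * (path_prob init P T v * lik f T x v)"
proof -
  have h1: "(\<Prod>t\<in>{2..b}. P (merge b u v (t-1)) (merge b u v t)) = (\<Prod>t\<in>{2..b}. P (u (t-1)) (u t))" for u v :: "nat \<Rightarrow> 'a"
    by (rule prod.cong) (auto simp: merge_def)
  have h2: "(\<Prod>t\<in>{1..b}. f (merge b u v t) (x t)) = (\<Prod>t\<in>{1..b}. f (u t) (x t))" for u v :: "nat \<Rightarrow> 'a"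
    by (rule prod.cong) (auto simp: merge_def)
  have t1: "(\<Prod>t\<in>{Suc b..T}. P (merge b u v (t-1)) (merge b u v t)) = (\<Prod>t\<in>{Suc b..T}. P (v (t-1)) (v t))"
  proof (rule prod.cong)
    fix t assume "t \<in> {Suc b..T}"
    moreover have "t - 1 \<le> b \<Longrightarrow> t - 1 = b" using calculation by auto
    ultimately show "P (merge b u v (t-1)) (merge b u v t) = P (v (t-1)) (v t)"
      using assms by (auto simp: merge_def)
  qed simp
  have t2: "(\<Prod>t\<in>{Suc b..T}. P (merge b v u (t-1)) (merge b v u t)) = (\<Prod>t\<in>{Suc b..T}. P (u (t-1)) (u t))"
  proof (rule prod.cong)
    fix t assume "t \<in> {Suc b..T}"
    moreover have "t - 1 \<le> b \<Longrightarrow> t - 1 = b" using calculation by auto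
    ultimately show "P (merge b v u (t-1)) (merge b v u t) = P (u (t-1)) (u t)"
      using assms by (auto simp: merge_def)
  qed simp
  have t3: "(\<Prod>t\<in>{Suc b..T}. f (merge b u v t) (x t)) = (\<Prod>t\<in>{Suc b..T}. f (v t) (x t))" for u v :: "nat \<Rightarrow> 'a"
    by (rule prod.cong) (auto simp: merge_def)
  have m1: "merge b u v 1 = u 1" "merge b v u 1 = v 1" using assms by (auto simp: merge_def)
  show ?thesis
    unfolding w_split[OF assms(1,2)] h1 h2 t1 t2 t3 m1 by (simp add: ac_simps)
qed

lemma fin_agree: "finite (agree T a b (s :: nat \<Rightarrow> 's::finite))"
proof -
  have "finite (paths T :: (nat \<Rightarrow> 's) set)" unfolding paths_def by (rule finite_PiE) auto
  then show ?thesis unfolding agree_def by simp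
qed

lemma merge_paths: "u \<in> paths T \<Longrightarrow> v \<in> paths T \<Longrightarrow> merge b u v \<in> paths T"
  by (auto simp: paths_def merge_def PiE_iff extensional_def)

lemma merge_merge: "merge b (merge b u v) (merge b v u) = u"
  by (auto simp: merge_def)

lemma sum_markov:
  fixes init :: "'s::finite \<Rightarrow> real" and s :: "nat \<Rightarrow> 's"
  assumes "1 \<le> a" "a \<le> c" "c \<le> b" "b \<le> d" "d \<le> T"
  shows "(\<Sum>u\<in>agree T a b s. path_prob init P T u * lik f T x u) * (\<Sum>u\<in>agree T c d s. path_prob init P T u * lik f T x u)
       = (\<Sum>u\<in>agree T a d s. path_prob init P T u * lik f T x u) * (\<Sum>u\<in>agree T c b s. path_prob init P T u * lik f T x u)"
proof -
  define W where "W = (\<lambda>u. path_prob init P T u * lik f T x u)"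
  let ?h = "\<lambda>(u,v). (merge b u v, merge b v u)"
  have bij: "bij_betw ?h (agree T a b s \<times> agree T c d s) (agree T a d s \<times> agree T c b s)"
  proof (rule bij_betw_byWitness[where f'="?h"])
    show "\<forall>p\<in>agree T a b s \<times> agree T c d s. ?h (?h p) = p"
      by (auto simp: merge_merge)
    show "\<forall>p\<in>agree T a d s \<times> agree T c b s. ?h (?h p) = p"
      by (auto simp: merge_merge)
    show "?h ` (agree T a b s \<times> agree T c d s) \<subseteq> agree T a d s \<times> agree T c b s"
      using assms by (auto simp: agree_def merge_paths) (auto simp: merge_def)
    show "?h ` (agree T a d s \<times> agree T c b s) \<subseteq> agree T a b s \<times> agree T c d s"
      using assms by (auto simp: agree_def merge_paths) (auto simp: merge_def)
  qed
  have "(\<Sum>u\<in>agree T a b s. W u) * (\<Sum>u\<in>agree T c d s. W u) = (\<Sum>(u,v)\<in>agree T a b s \<times> agree T c d s. W u * W v)"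
    by (simp add: sum_product sum.cartesian_product)
  also have "\<dots> = (\<Sum>p\<in>agree T a b s \<times> agree T c d s. (\<lambda>(u,v). W u * W v) (?h p))"
  proof (rule sum.cong)
    fix p assume p: "p \<in> agree T a b s \<times> agree T c d s"
    obtain u v where uv: "p = (u,v)" by force
    have "u b = v b" using p assms unfolding uv agree_def by auto
    then show "(case p of (u, v) \<Rightarrow> W u * W v) = (\<lambda>(u,v). W u * W v) (?h p)"
      unfolding uv W_def using w_merge[of b T u v init P f x, symmetric] assms by simp
  qed simp
  also have "\<dots> = (\<Sum>(u,v)\<in>agree T a d s \<times> agree T c b s. W u * W v)"
    by (rule sum.reindex_bij_betw[OF bij])
  also have "\<dots> = (\<Sum>u\<in>agree T a d s. W u) * (\<Sum>u\<in>agree T c b s. W u)"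
    by (simp add: sum_product sum.cartesian_product)
  finally show ?thesis unfolding W_def .
qed



lemma core:
  fixes q :: "nat \<Rightarrow> nat \<Rightarrow> real"
  assumes M: "\<And>a c b d. 1 \<le> a \<Longrightarrow> a \<le> c \<Longrightarrow> c \<le> b \<Longrightarrow> b \<le> d \<Longrightarrow> d \<le> N \<Longrightarrow> q a b * q c d = q a d * q c b"
    and Z: "\<And>a b a' b'. 1 \<le> a' \<Longrightarrow> a' \<le> a \<Longrightarrow> a \<le> b \<Longrightarrow> b \<le> b' \<Longrightarrow> b' \<le> N \<Longrightarrow> q a b = 0 \<Longrightarrow> q a' b' = 0"
    and k: "2 \<le> k" "k \<le> T" "T \<le> N"
  shows "q 1 k * (\<Prod>i\<in>{k+1..T}. q (i+1-k) i) * q (T+2-k) T = q 1 T * (\<Prod>i\<in>{k..T}. q (i+2-k) i)"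
  using k(2,3)
proof (induction T rule: dec_induct)
  case base
  then show ?case by simp
next
  case (step n)
  define X where "X = q 1 k * (\<Prod>i\<in>{k+1..n}. q (i+1-k) i)"
  define Y where "Y = (\<Prod>i\<in>{k..n}. q (i+2-k) i)"
  define c where "c = n + 2 - k"
  have IH: "X * q c n = q 1 n * Y" using step unfolding X_def Y_def c_def by simp
  have Mi: "q 1 n * q c (Suc n) = q 1 (Suc n) * q c n"
    by (rule M) (use step k in \<open>auto simp: c_def\<close>)
  have L: "q 1 k * (\<Prod>i\<in>{k+1..Suc n}. q (i+1-k) i) * q (Suc n+2-k) (Suc n) = X * q c (Suc n) * q (c+1) (Suc n)"
    using step k by (simp add: X_def c_def Suc_diff_le)
  have R: "q 1 (Suc n) * (\<Prod>i\<in>{k..Suc n}. q (i+2-k) i) = q 1 (Suc n) * Y * q (c+1) (Suc n)"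
    using step k by (simp add: Y_def c_def Suc_diff_le)
  have key: "X * q c (Suc n) = q 1 (Suc n) * Y"
  proof (cases "q c n = 0")
    case True
    have "Y = 0" unfolding Y_def
      by (rule prod_zero) (use True step in \<open>auto simp: c_def intro!: bexI[of _ n]\<close>)
    moreover have "q c (Suc n) = 0"
      by (rule Z[OF _ _ _ _ _ True]) (use step k in \<open>auto simp: c_def\<close>)
    ultimately show ?thesis by simp
  next
    case False
    have "X * q c (Suc n) * q c n = q 1 (Suc n) * Y * q c n"
      using IH Mi by (metis mult.commute mult.left_commute)
    then show ?thesis using False by simp
  qed
  show ?case unfolding L R key ..
qed



lemma natfix: "k \<le> x \<Longrightarrow> nat (int x - int k + 1) = Suc x - k" by arith

lemma decomp:
  fixes q :: "nat \<Rightarrow> nat \<Rightarrow> real"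
  assumes "1 \<le> k" "k \<le> T"
  shows "(\<Prod>j\<in>{1 - int k..int T - 1}. q (nat (max (j + 1) 1)) (nat (min (j + int k) (int T)))) =
    (\<Prod>i\<in>{1..k}. q 1 i) * (\<Prod>i\<in>{k+1..T}. q (i+1-k) i) * (\<Prod>i\<in>{T+1..T+k-1}. q (i+1-k) T)"
proof -
  define h where "h = (\<lambda>i::nat. q (nat (max (int i - int k + 1) 1)) (nat (min (int i) (int T))))"
  have "(\<Prod>j\<in>{1 - int k..int T - 1}. q (nat (max (j + 1) 1)) (nat (min (j + int k) (int T)))) =
        (\<Prod>i\<in>{1..T+k-1}. h i)"
    by (rule prod.reindex_bij_witness[where i="\<lambda>i. int i - int k" and j="\<lambda>j. nat (j + int k)"])
       (auto simp: h_def)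
  also have "{1..T+k-1} = {1..k} \<union> {k+1..T} \<union> {T+1..T+k-1}" using assms by auto
  also have "(\<Prod>i\<in>{1..k} \<union> {k+1..T} \<union> {T+1..T+k-1}. h i) =
      (\<Prod>i\<in>{1..k}. h i) * (\<Prod>i\<in>{k+1..T}. h i) * (\<Prod>i\<in>{T+1..T+k-1}. h i)"
    using assms by (subst prod.union_disjoint; auto simp: prod.union_disjoint)
  also have "(\<Prod>i\<in>{1..k}. h i) = (\<Prod>i\<in>{1..k}. q 1 i)"
    by (rule prod.cong) (use assms in \<open>auto simp: h_def max_def min_def natfix\<close>)
  also have "(\<Prod>i\<in>{k+1..T}. h i) = (\<Prod>i\<in>{k+1..T}. q (i+1-k) i)"
    by (rule prod.cong) (use assms in \<open>auto simp: h_def max_def min_def natfix\<close>)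
  also have "(\<Prod>i\<in>{T+1..T+k-1}. h i) = (\<Prod>i\<in>{T+1..T+k-1}. q (i+1-k) T)"
    by (rule prod.cong) (use assms in \<open>auto simp: h_def max_def min_def natfix\<close>)
  finally show ?thesis .
qed



lemma prodrel:
  fixes q :: "nat \<Rightarrow> nat \<Rightarrow> real"
  assumes M: "\<And>a c b d. 1 \<le> a \<Longrightarrow> a \<le> c \<Longrightarrow> c \<le> b \<Longrightarrow> b \<le> d \<Longrightarrow> d \<le> T \<Longrightarrow> q a b * q c d = q a d * q c b"
    and Z: "\<And>a b a' b'. 1 \<le> a' \<Longrightarrow> a' \<le> a \<Longrightarrow> a \<le> b \<Longrightarrow> b \<le> b' \<Longrightarrow> b' \<le> T \<Longrightarrow> q a b = 0 \<Longrightarrow> q a' b' = 0"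
    and k: "2 \<le> k" "k \<le> T"
  shows "(\<Prod>j\<in>{1 - int k..int T - 1}. q (nat (max (j + 1) 1)) (nat (min (j + int k) (int T)))) =
     q 1 T * (\<Prod>j\<in>{1 - int (k-1)..int T - 1}. q (nat (max (j + 1) 1)) (nat (min (j + int (k-1)) (int T))))"
proof -
  obtain m where m: "k = Suc m" "1 \<le> m" using k by (cases k) auto
  have L: "(\<Prod>i\<in>{1..k}. q 1 i) = (\<Prod>i\<in>{1..m}. q 1 i) * q 1 k" using m by simp
  have F: "(\<Prod>i\<in>{m+1..T}. q (i+1-m) i) = (\<Prod>i\<in>{k..T}. q (i+2-k) i)"
    using m by (intro prod.cong) auto
  have R: "(\<Prod>i\<in>{T+1..T+k-1}. q (i+1-k) T) = q (T+2-k) T * (\<Prod>i\<in>{T+1..T+m-1}. q (i+1-m) T)"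
  proof -
    have "(\<Prod>i\<in>{T+1..T+k-1}. q (i+1-k) T) = q (T+2-k) T * (\<Prod>i\<in>{Suc (T+1)..Suc (T+m-1)}. q (i+1-k) T)"
      using m by (subst prod.atLeast_Suc_atMost) (auto simp: Suc_diff_le)
    also have "(\<Prod>i\<in>{Suc (T+1)..Suc (T+m-1)}. q (i+1-k) T) = (\<Prod>i\<in>{T+1..T+m-1}. q (i+1-m) T)"
      unfolding prod.shift_bounds_cl_Suc_ivl using m by simp
    finally show ?thesis .
  qed
  have C: "q 1 k * (\<Prod>i\<in>{k+1..T}. q (i+1-k) i) * q (T+2-k) T = q 1 T * (\<Prod>i\<in>{k..T}. q (i+2-k) i)"
    by (rule core[where N=T]) (use M Z k in auto)
  have km: "k - 1 = m" using m by simp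
  have D1: "(\<Prod>j\<in>{1 - int k..int T - 1}. q (nat (max (j + 1) 1)) (nat (min (j + int k) (int T)))) =
    (\<Prod>i\<in>{1..k}. q 1 i) * (\<Prod>i\<in>{k+1..T}. q (i+1-k) i) * (\<Prod>i\<in>{T+1..T+k-1}. q (i+1-k) T)"
    by (rule decomp) (use k in auto)
  have D2: "(\<Prod>j\<in>{1 - int (k-1)..int T - 1}. q (nat (max (j + 1) 1)) (nat (min (j + int (k-1)) (int T)))) =
    (\<Prod>i\<in>{1..m}. q 1 i) * (\<Prod>i\<in>{m+1..T}. q (i+1-m) i) * (\<Prod>i\<in>{T+1..T+m-1}. q (i+1-m) T)"
    unfolding km by (rule decomp) (use k m in auto)
  show ?thesis unfolding D1 D2 L R F
  proof -
    let ?A = "(\<Prod>i\<in>{1..m}. q 1 i)" and ?B = "(\<Prod>i\<in>{T+1..T+m-1}. q (i+1-m) T)"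
    have "?A * q 1 k * (\<Prod>i\<in>{k+1..T}. q (i+1-k) i) * (q (T+2-k) T * ?B)
        = ?A * ?B * (q 1 k * (\<Prod>i\<in>{k+1..T}. q (i+1-k) i) * q (T+2-k) T)" by (simp add: ac_simps)
    also have "\<dots> = ?A * ?B * (q 1 T * (\<Prod>i\<in>{k..T}. q (i+2-k) i))" unfolding C ..
    finally show "?A * q 1 k * (\<Prod>i\<in>{k+1..T}. q (i+1-k) i) * (q (T+2-k) T * ?B)
        = q 1 T * (?A * (\<Prod>i\<in>{k..T}. q (i+2-k) i) * ?B)" by (simp add: ac_simps)
  qed
qed



lemma eln_mult: "0 \<le> x \<Longrightarrow> 0 \<le> y \<Longrightarrow> eln (x*y) = eln x + eln y"
  by (auto simp: eln_def ln_mult)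

lemma ereal_neg_split:
  assumes "c < 0" "0 \<le> x" "0 \<le> y"
  shows "ereal c * eln (x*y) = ereal c * eln x + ereal c * eln y"
  using assms by (cases "x = 0"; cases "y = 0") (auto simp: eln_def ln_mult algebra_simps)

lemma Rbar_split:
  fixes q :: "nat \<Rightarrow> nat \<Rightarrow> real"
  assumes M: "\<And>a c b d. 1 \<le> a \<Longrightarrow> a \<le> c \<Longrightarrow> c \<le> b \<Longrightarrow> b \<le> d \<Longrightarrow> d \<le> T \<Longrightarrow> q a b * q c d = q a d * q c b"
    and Z: "\<And>a b a' b'. 1 \<le> a' \<Longrightarrow> a' \<le> a \<Longrightarrow> a \<le> b \<Longrightarrow> b \<le> b' \<Longrightarrow> b' \<le> T \<Longrightarrow> q a b = 0 \<Longrightarrow> q a' b' = 0"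
    and k: "2 \<le> k" "k \<le> T" and nn: "\<And>a b. q a b \<ge> 0"
  shows "Rbar T k q = Rbar_inf T q + Rbar T (k - 1) q"
proof -
  have c: "- 1 / real T < 0" using k by simp
  show ?thesis
    unfolding Rbar_def Rbar_inf_def
    apply (subst prodrel[where q=q and T=T and k=k])
    apply (rule M; assumption)
    apply (rule Z; assumption)
    apply (rule k)
    apply (rule k)
    apply (rule ereal_neg_split[OF c nn prod_nonneg])
    using nn by auto
qed


theorem corollary5:
  fixes init :: "'s::finite \<Rightarrow> real" and P :: "'s \<Rightarrow> 's \<Rightarrow> real"
    and M :: "'x measure" and f :: "'s \<Rightarrow> 'x \<Rightarrow> real"
    and T k :: nat and s :: "nat \<Rightarrow> 's"
  assumes init_nonneg: "\<forall>a. init a \<ge> 0" and init_sum: "(\<Sum>a\<in>UNIV. init a) = 1"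
    and P_nonneg: "\<forall>a b. P a b \<ge> 0" and P_sum: "\<forall>a. (\<Sum>b\<in>UNIV. P a b) = 1"
    and f_meas: "\<forall>a. f a \<in> borel_measurable M"
    and f_nonneg: "\<forall>a. \<forall>y\<in>space M. f a y \<ge> 0"
    and f_dens: "\<forall>a. (\<integral>\<^sup>+ y. ennreal (f a y) \<partial>M) = 1"
    and T_pos: "T \<ge> 1" and k_le: "k \<le> T" and k_gt: "k > 1"
    and s_path: "s \<in> paths T"
  shows "Rbar T k (prior_marg init P T s)
           = Rbar_inf T (prior_marg init P T s) + Rbar T (k - 1) (prior_marg init P T s)
         \<and> (\<forall>x. (\<forall>t\<in>{1..T}. x t \<in> space M) \<longrightarrow> obs_density init P f T x > 0 \<longrightarrow>
              Rbar T k (post_marg init P f T x s)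
                = Rbar_inf T (post_marg init P f T x s) + Rbar T (k - 1) (post_marg init P f T x s))"
  proof -
  have k2: "2 \<le> k" using k_gt by simp
  have pp_nn: "path_prob init P T u \<ge> 0" for u
    unfolding path_prob_def using init_nonneg P_nonneg by (intro mult_nonneg_nonneg prod_nonneg) auto
  have lik1: "lik (\<lambda>_ _. 1::real) T x u = 1" for x :: "nat \<Rightarrow> 'x" and u :: "nat \<Rightarrow> 's"
    by (simp add: lik_def)
  have sub: "agree T a' b' s \<subseteq> agree T a b s" if "a' \<le> a" "b \<le> b'" for a b a' b'
    using that by (auto simp: agree_def)
  have part1: "Rbar T k (prior_marg init P T s)
           = Rbar_inf T (prior_marg init P T s) + Rbar T (k - 1) (prior_marg init P T s)"
  proof (rule Rbar_split[OF _ _ k2 k_le])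
    fix a c b d :: nat assume h: "1 \<le> a" "a \<le> c" "c \<le> b" "b \<le> d" "d \<le> T"
    show "prior_marg init P T s a b * prior_marg init P T s c d = prior_marg init P T s a d * prior_marg init P T s c b"
      using sum_markov[OF h, of init P "\<lambda>_ _. 1::real" "\<lambda>_. undefined" s]
      unfolding prior_marg_def by (simp add: lik_def)
  next
    fix a b a' b' :: nat assume h: "1 \<le> a'" "a' \<le> a" "a \<le> b" "b \<le> b'" "b' \<le> T"
      and z: "prior_marg init P T s a b = 0"
    have "prior_marg init P T s a' b' \<le> prior_marg init P T s a b"
      unfolding prior_marg_def by (rule sum_mono2[OF fin_agree sub]) (use h pp_nn in auto)
    moreover have "prior_marg init P T s a' b' \<ge> 0" unfolding prior_marg_def by (rule sum_nonneg) (use pp_nn in auto)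
    ultimately show "prior_marg init P T s a' b' = 0" using z by simp
  next
    fix a b show "prior_marg init P T s a b \<ge> 0" unfolding prior_marg_def by (rule sum_nonneg) (use pp_nn in auto)
  qed
  have part2: "Rbar T k (post_marg init P f T x s)
                = Rbar_inf T (post_marg init P f T x s) + Rbar T (k - 1) (post_marg init P f T x s)"
    if xs: "\<forall>t\<in>{1..T}. x t \<in> space M" and Zp: "obs_density init P f T x > 0" for x
  proof -
    define Q where "Q = obs_density init P f T x"
    define S where "S = (\<lambda>a b. \<Sum>u\<in>agree T a b s. path_prob init P T u * lik f T x u)"
    have pm: "post_marg init P f T x s a b = S a b / Q" for a b unfolding post_marg_def S_def Q_def ..
    have w_nn: "path_prob init P T u * lik f T x u \<ge> 0" for u
      unfolding lik_def using pp_nn xs f_nonneg by (intro mult_nonneg_nonneg prod_nonneg) auto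
    have S_nn: "S a b \<ge> 0" for a b unfolding S_def by (rule sum_nonneg) (use w_nn in auto)
    have Qp: "Q > 0" using Zp Q_def by simp
    show ?thesis
    proof (rule Rbar_split[OF _ _ k2 k_le])
      fix a c b d :: nat assume h: "1 \<le> a" "a \<le> c" "c \<le> b" "b \<le> d" "d \<le> T"
      have "S a b * S c d = S a d * S c b" unfolding S_def by (rule sum_markov[OF h])
      then show "post_marg init P f T x s a b * post_marg init P f T x s c d = post_marg init P f T x s a d * post_marg init P f T x s c b"
        unfolding pm by (simp add: field_simps)
    next
      fix a b a' b' :: nat assume h: "1 \<le> a'" "a' \<le> a" "a \<le> b" "b \<le> b'" "b' \<le> T"
        and z: "post_marg init P f T x s a b = 0"
      have z': "S a b = 0" using z Qp unfolding pm by simp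
      have "S a' b' \<le> S a b"
        unfolding S_def by (rule sum_mono2[OF fin_agree sub]) (use h w_nn in auto)
      then have "S a' b' = 0" using z' S_nn[of a' b'] by simp
      then show "post_marg init P f T x s a' b' = 0" unfolding pm by simp
    next
      fix a b show "post_marg init P f T x s a b \<ge> 0" unfolding pm using S_nn Qp by simp
    qed
  qed
  show ?thesis using part1 part2 by blast
qed

end
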